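(* There is at most one sequence $(A_k(q))_{k\geq0}$ of power series in $q$ satisfying: (a) each $A_k$ is a quasi-modular form of weight $2k$ and $\frac{d}{dG_2}A_k=2A_{k-1}$ (where $A_{-1}:=0$); (b) for every $n\geq0$ there exists a polynomial $p_n(k)$ of degree $2n$ such that for every $k\geq n$, $\big[A_k(q)\big]_{q^n}=\frac{1}{(-4)^k(2k+1)!!}\,p_n(k)$; (c) $A_0=1+O(q)$.
   Context: For even $k\geq 2$, $G_k(q)=-\frac{B_k}{2k}+\sum_{n\geq1}\sum_{d|n}d^{k-1}q^n$ ($B_k$ Bernoulli numbers). The algebra of quasi-modular forms is $\mathsf{QMod}=\mathbb{C}[G_2,G_4,G_6]$ (a free polynomial algebra), graded by weight with $G_k$ of weight $k$, viewed inside power series in $q$; $\frac{d}{dG_2}$ is the partial derivative with respect to the generator $G_2$. $[f]_{q^n}$ denotes the $q^n$-coefficient and $(2k+1)!!=(2k+1)(2k-1)\cdots3\cdot1$. *)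

theory Defs
  imports "HOL-Computational_Algebra.Computational_Algebra"
begin

text \<open>Bernoulli numbers (convention B_1 = -1/2; only even indices are used),
  via the standard recursion sum over j from 0 to n of binomial(n+1,j) B_j = 0 for n > 0.\<close>
fun bernoulli :: "nat \<Rightarrow> real" where
  "bernoulli n = (if n = 0 then 1
     else - (\<Sum>j<n. real (Suc n choose j) * bernoulli j) / real (Suc n))"

definition eisenstein_G :: "nat \<Rightarrow> complex fps" where
  "eisenstein_G k = Abs_fps (\<lambda>n. if n = 0 then - of_real (bernoulli k) / (2 * of_nat k)
                                else (\<Sum>d | d dvd n. of_nat d ^ (k - 1)))"

text \<open>Exponent triples (a,b,c) of monomials G_2^a G_4^b G_6^c of weight 2k,
  i.e. 2a + 4b + 6c = 2k.\<close>
definition wt_monos :: "nat \<Rightarrow> (nat \<times> nat \<times> nat) set" where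
  "wt_monos k = {(a, b, c). a + 2 * b + 3 * c = k}"

definition qm_eval :: "nat \<Rightarrow> (nat \<Rightarrow> nat \<Rightarrow> nat \<Rightarrow> complex) \<Rightarrow> complex fps" where
  "qm_eval k P = (\<Sum>(a, b, c)\<in>wt_monos k.
      fps_const (P a b c) * eisenstein_G 2 ^ a * eisenstein_G 4 ^ b * eisenstein_G 6 ^ c)"

definition odd_dfact :: "nat \<Rightarrow> nat" where
  "odd_dfact k = (\<Prod>i\<le>k. 2 * i + 1)"

end

theory Submission
  imports Defs
begin

declare bernoulli.simps[simp del]
lemma b0: "bernoulli 0 = 1" by (subst bernoulli.simps) simp
lemma b1: "bernoulli (Suc 0) = -1/2" by (subst bernoulli.simps) (simp add: b0)
lemma chs: "(4 choose 2) = (6::nat)" "(5 choose 2) = (10::nat)" "(6 choose 2) = (15::nat)"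
  "(6 choose 4) = (15::nat)" "(7 choose 2) = (21::nat)" "(7 choose 4) = (35::nat)"
  by (simp_all add: numeral_eq_Suc)
lemma b2: "bernoulli 2 = 1/6" by (subst bernoulli.simps) (simp add: b0 b1 lessThan_nat_numeral chs)
lemma b3: "bernoulli 3 = 0" by (subst bernoulli.simps) (simp add: b0 b1 b2 lessThan_nat_numeral chs)
lemma b4: "bernoulli 4 = -1/30" by (subst bernoulli.simps) (simp add: b0 b1 b2 b3 lessThan_nat_numeral chs)
lemma b5: "bernoulli 5 = 0" by (subst bernoulli.simps) (simp add: b0 b1 b2 b3 b4 lessThan_nat_numeral chs)
lemma b6: "bernoulli 6 = 1/42" by (subst bernoulli.simps) (simp add: b0 b1 b2 b3 b4 b5 lessThan_nat_numeral chs)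
lemma G4_0: "eisenstein_G 4 $ 0 = 1/240" by (simp add: eisenstein_G_def b4)
lemma G6_0: "eisenstein_G 6 $ 0 = -1/504" by (simp add: eisenstein_G_def b6)
lemma G4_1: "eisenstein_G 4 $ 1 = 1" by (simp add: eisenstein_G_def)
lemma G6_1: "eisenstein_G 6 $ 1 = 1" by (simp add: eisenstein_G_def)
lemma G41s: "eisenstein_G 4 $ Suc 0 = 1" using G4_1 by simp
lemma G61s: "eisenstein_G 6 $ Suc 0 = 1" using G6_1 by simp

lemma ofnat_nth: "(of_nat k * f) $ j = (of_nat k :: 'a::comm_semiring_1) * f $ j"
  by (metis fps_mult_left_const_nth fps_of_nat)

definition W :: "nat \<Rightarrow> (nat \<times> nat) set" where
  "W m = {(b, c). 2 * b + 3 * c = m}"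

lemma finite_W: "finite (W m)"
  by (rule finite_subset[of _ "{..m} \<times> {..m}"]) (auto simp: W_def)

lemma tri:
  fixes X :: "nat \<Rightarrow> complex fps" and s :: "nat \<Rightarrow> complex"
  assumes X: "\<And>i. i \<le> I \<Longrightarrow> X i \<noteq> 0 \<and> subdegree (X i) = i"
    and z: "\<And>j. j \<le> I \<Longrightarrow> (\<Sum>i\<le>I. fps_const (s i) * X i) $ j = 0"
  shows "\<forall>i\<le>I. s i = 0"
proof -
  have "i \<le> I \<longrightarrow> s i = 0" for i
  proof (induction i rule: less_induct)
    case (less i)
    show ?case
    proof
      assume iI: "i \<le> I"
      have "0 = (\<Sum>i\<le>I. fps_const (s i) * X i) $ i" using z[OF iI] by simp
      also have "\<dots> = (\<Sum>i'\<le>I. s i' * X i' $ i)" by (simp add: fps_sum_nth)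
      also have "\<dots> = (\<Sum>i'\<le>I. if i' = i then s i * X i $ i else 0)"
      proof (rule sum.cong)
        fix i' assume "i' \<in> {..I}"
        then have i'I: "i' \<le> I" by simp
        show "s i' * X i' $ i = (if i' = i then s i * X i $ i else 0)"
        proof (cases "i' < i")
          case True then show ?thesis using less.IH i'I by auto
        next
          case False
          show ?thesis
          proof (cases "i' = i")
            case False
            with \<open>\<not> i' < i\<close> have "i < subdegree (X i')" using X[OF i'I] by simp
            then show ?thesis using False by auto
          qed simp
        qed
      qed simp
      also have "\<dots> = s i * X i $ i" using iI by simp
      finally have "s i * X i $ i = 0" by simp
      moreover have "X i $ i \<noteq> 0" using X[OF iI] nth_subdegree_nonzero[of "X i"] by simp
      ultimately show "s i = 0" by simp
    qed
  qed
  then show ?thesis by blast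
qed

lemma weight_zero:
  fixes r :: "nat \<Rightarrow> nat \<Rightarrow> complex"
  assumes z: "\<And>j. j < n \<Longrightarrow> (\<Sum>(b,c)\<in>W m. fps_const (r b c) * eisenstein_G 4 ^ b * eisenstein_G 6 ^ c) $ j = 0"
    and mn: "m < 6 * n"
  shows "(\<Sum>(b,c)\<in>W m. fps_const (r b c) * eisenstein_G 4 ^ b * eisenstein_G 6 ^ c) = 0"
proof -
  define g4 :: complex where "g4 = 1/240"
  define g6 :: complex where "g6 = -1/504"
  define E4 where "E4 = fps_const (1/g4) * eisenstein_G 4"
  define E6 where "E6 = fps_const (1/g6) * eisenstein_G 6"
  have G4: "eisenstein_G 4 = fps_const g4 * E4"
    by (rule fps_ext) (simp add: E4_def g4_def)
  have G6: "eisenstein_G 6 = fps_const g6 * E6"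
    by (rule fps_ext) (simp add: E6_def g6_def)
  have E40: "E4 $ 0 = 1" and E60: "E6 $ 0 = 1" and E41: "E4 $ 1 = 240" and E61: "E6 $ 1 = -504"
    by (simp_all add: E4_def E6_def g4_def g6_def G4_0 G6_0 G41s G61s)
  define D where "D = E6^2 - E4^3"
  have D0: "D $ 0 = 0" unfolding D_def by (simp only: fps_sub_nth fps_power_zeroth E40 E60) simp
  have D1: "D $ 1 = -1728"
    unfolding D_def power2_eq_square power3_eq_cube
    by (simp only: fps_sub_nth fps_mult_nth_1 fps_mult_nth_0 E40 E60 E41 E61) simp
  have Dnz: "D \<noteq> 0" using D1 by auto
  have sD: "subdegree D = 1" by (rule subdegreeI) (use D0 D1 in auto)
  have E4nz: "E4 \<noteq> 0" using E40 by auto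
  have E6nz: "E6 \<noteq> 0" using E60 by auto
  have sE4: "subdegree E4 = 0" by (rule subdegreeI) (use E40 in auto)
  have sE6: "subdegree E6 = 0" by (rule subdegreeI) (use E60 in auto)
  define e where "e = m mod 2"
  define B where "B = (m - 3 * e) div 2"
  define I where "I = m div 6"
  define X where "X i = E4 ^ (B - 3 * i) * E6 ^ e * D ^ i" for i
  have X: "X i \<noteq> 0 \<and> subdegree (X i) = i" for i
    using E4nz E6nz Dnz sE4 sE6 sD by (simp add: X_def)
  have mono: "eisenstein_G 4 ^ b * eisenstein_G 6 ^ c
      = fps_const (g4 ^ b * g6 ^ c) * (\<Sum>i\<le>I. of_nat (c div 2 choose i) * X i)"
    if bc: "(b, c) \<in> W m" for b c
  proof -
    define h where "h = c div 2"
    from bc have eq: "2 * b + 3 * c = m" by (simp add: W_def)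
    have ce: "c = e + 2 * h" unfolding e_def h_def using eq by presburger
    have "m - 3 * e = 2 * (b + 3 * h)" using eq ce by simp
    then have bh: "b + 3 * h = B" by (simp add: B_def)
    have "6 * h \<le> m" using eq ce by linarith
    then have hI: "h \<le> I" unfolding I_def by presburger
    have "E4 ^ b * E6 ^ c = E4 ^ b * E6 ^ e * (D + E4 ^ 3) ^ h"
      by (simp add: ce power_add power_mult D_def)
    also have "\<dots> = E4 ^ b * E6 ^ e * (\<Sum>i\<le>h. of_nat (h choose i) * D ^ i * (E4 ^ 3) ^ (h - i))"
      by (simp add: binomial_ring)
    also have "\<dots> = (\<Sum>i\<le>h. of_nat (h choose i) * X i)"
      unfolding sum_distrib_left
    proof (rule sum.cong)
      fix i assume "i \<in> {..h}"
      then have "b + 3 * (h - i) = B - 3 * i" using bh by auto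
      then have "E4 ^ b * (E4 ^ 3) ^ (h - i) = E4 ^ (B - 3 * i)"
        by (metis power_add power_mult)
      then show "E4 ^ b * E6 ^ e * (of_nat (h choose i) * D ^ i * (E4 ^ 3) ^ (h - i))
          = of_nat (h choose i) * X i"
        unfolding X_def by (metis (no_types, lifting) mult.commute mult.left_commute)
    qed simp
    also have "\<dots> = (\<Sum>i\<le>I. of_nat (h choose i) * X i)"
      by (rule sum.mono_neutral_left) (use hI in auto)
    finally have "E4 ^ b * E6 ^ c = (\<Sum>i\<le>I. of_nat (h choose i) * X i)" .
    then show ?thesis
      by (simp add: G4 G6 power_mult_distrib h_def mult_ac)
  qed
  define s where "s i = (\<Sum>(b,c)\<in>W m. r b c * (g4 ^ b * g6 ^ c) * of_nat (c div 2 choose i))" for i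
  have F: "(\<Sum>(b,c)\<in>W m. fps_const (r b c) * eisenstein_G 4 ^ b * eisenstein_G 6 ^ c)
        = (\<Sum>i\<le>I. fps_const (s i) * X i)" (is "?F = _")
  proof (rule fps_ext)
    fix j
    have "?F $ j = (\<Sum>(b,c)\<in>W m. \<Sum>i\<le>I. r b c * (g4 ^ b * g6 ^ c) * of_nat (c div 2 choose i) * X i $ j)"
      unfolding fps_sum_nth
    proof (rule sum.cong)
      fix x assume "x \<in> W m"
      then obtain b c where x: "x = (b, c)" and bc: "(b,c) \<in> W m" by (cases x) auto
      show "(case x of (b, c) \<Rightarrow> fps_const (r b c) * eisenstein_G 4 ^ b * eisenstein_G 6 ^ c) $ j =
         (case x of (b, c) \<Rightarrow> \<Sum>i\<le>I. r b c * (g4 ^ b * g6 ^ c) * of_nat (c div 2 choose i) * X i $ j)"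
        unfolding x case_prod_conv mult.assoc[of "fps_const (r b c)"] fps_mult_left_const_nth mono[OF bc]
          fps_sum_nth ofnat_nth sum_distrib_left
        by (simp add: mult_ac)
    qed simp
    also have "\<dots> = (\<Sum>i\<le>I. \<Sum>(b,c)\<in>W m. r b c * (g4 ^ b * g6 ^ c) * of_nat (c div 2 choose i) * X i $ j)"
      by (subst sum.swap) (simp add: case_prod_beta)
    also have "\<dots> = (\<Sum>i\<le>I. fps_const (s i) * X i) $ j"
      by (simp add: fps_sum_nth s_def sum_distrib_right case_prod_beta)
    finally show "?F $ j = (\<Sum>i\<le>I. fps_const (s i) * X i) $ j" .
  qed
  have "\<forall>i\<le>I. s i = 0"
  proof (rule tri[OF X])
    fix j assume "j \<le> I"
    then have "j < n" using mn unfolding I_def by linarith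
    then show "(\<Sum>i\<le>I. fps_const (s i) * X i) $ j = 0" using z F by simp
  qed
  then show ?thesis unfolding F by simp
qed

lemma odd_dfact_pos: "odd_dfact k > 0"
  unfolding odd_dfact_def by (rule prod_pos) auto

theorem lemma3p2:
  fixes A A' :: "nat \<Rightarrow> complex fps"
    and P P' :: "nat \<Rightarrow> nat \<Rightarrow> nat \<Rightarrow> nat \<Rightarrow> complex"
  assumes qm: "\<And>k. A k = qm_eval k (P k)"
    and dG2: "\<And>k a b c. k \<ge> 1 \<Longrightarrow> (a, b, c) \<in> wt_monos (k - 1) \<Longrightarrow>
                 of_nat (a + 1) * P k (a + 1) b c = 2 * P (k - 1) a b c"
    and poly_coeff: "\<And>n. \<exists>p :: complex poly. degree p = 2 * n \<and>
                 (\<forall>k\<ge>n. fps_nth (A k) n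
                    = poly p (of_nat k) / ((- 4) ^ k * of_nat (odd_dfact k)))"
    and const: "fps_nth (A 0) 0 = 1"
    and qm': "\<And>k. A' k = qm_eval k (P' k)"
    and dG2': "\<And>k a b c. k \<ge> 1 \<Longrightarrow> (a, b, c) \<in> wt_monos (k - 1) \<Longrightarrow>
                 of_nat (a + 1) * P' k (a + 1) b c = 2 * P' (k - 1) a b c"
    and poly_coeff': "\<And>n. \<exists>p :: complex poly. degree p = 2 * n \<and>
                 (\<forall>k\<ge>n. fps_nth (A' k) n
                    = poly p (of_nat k) / ((- 4) ^ k * of_nat (odd_dfact k)))"
    and const': "fps_nth (A' 0) 0 = 1"
  shows "A = A'"
proof -
  define Q where "Q k a b c = P k a b c - P' k a b c" for k a b c
  define F where "F m = (\<Sum>(b,c)\<in>W m. fps_const (Q m 0 b c) * eisenstein_G 4 ^ b * eisenstein_G 6 ^ c)" for m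
  define D where "D k = A k - A' k" for k
  have Qrec: "(a, b, c) \<in> wt_monos k \<Longrightarrow> Q k a b c = 2 ^ a / fact a * Q (k - a) 0 b c" for a b c k
  proof (induction a arbitrary: k)
    case 0 then show ?case by simp
  next
    case (Suc a)
    then have k1: "k \<ge> 1" and w: "(a, b, c) \<in> wt_monos (k - 1)" by (auto simp: wt_monos_def)
    have "of_nat (a + 1) * Q k (a + 1) b c = 2 * Q (k - 1) a b c"
      using dG2[OF k1 w] dG2'[OF k1 w] by (simp add: Q_def algebra_simps)
    then have "Q k (Suc a) b c = 2 / of_nat (Suc a) * Q (k - 1) a b c"
      by (simp add: field_simps del: of_nat_Suc)
    also have "\<dots> = 2 / of_nat (Suc a) * (2 ^ a / fact a * Q (k - 1 - a) 0 b c)"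
      using Suc.IH[OF w] by simp
    also have "\<dots> = 2 ^ Suc a / fact (Suc a) * Q (k - Suc a) 0 b c"
      by (simp add: field_simps del: of_nat_Suc)
    finally show ?case .
  qed
  have Dexp: "D k = (\<Sum>a\<le>k. fps_const (2 ^ a / fact a) * eisenstein_G 2 ^ a * F (k - a))" for k
  proof -
    have "D k = (\<Sum>(a,b,c)\<in>wt_monos k. fps_const (Q k a b c) * eisenstein_G 2 ^ a * eisenstein_G 4 ^ b * eisenstein_G 6 ^ c)"
      unfolding D_def qm qm' qm_eval_def sum_subtractf[symmetric]
      by (rule sum.cong) (auto simp: Q_def algebra_simps fps_const_sub[symmetric] simp del: fps_const_sub)
    also have "\<dots> = (\<Sum>(a,bc)\<in>(SIGMA a:{..k}. W (k - a)). fps_const (2 ^ a / fact a) * eisenstein_G 2 ^ a *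
         (case bc of (b, c) \<Rightarrow> fps_const (Q (k - a) 0 b c) * eisenstein_G 4 ^ b * eisenstein_G 6 ^ c))"
    proof -
      have ws: "wt_monos k = (SIGMA a:{..k}. W (k - a))"
        by (auto simp: wt_monos_def W_def)
      show ?thesis unfolding ws
      proof (rule sum.cong)
        fix x assume x: "x \<in> (SIGMA a:{..k}. W (k - a))"
        obtain a b c where xe: "x = (a, b, c)" by (cases x) auto
        have "Q k a b c = 2 ^ a / fact a * Q (k - a) 0 b c"
          using x xe ws by (intro Qrec) simp
        then show "(case x of (a, b, c) \<Rightarrow> fps_const (Q k a b c) * eisenstein_G 2 ^ a * eisenstein_G 4 ^ b * eisenstein_G 6 ^ c) =
          (case x of (a, bc) \<Rightarrow> fps_const (2 ^ a / fact a) * eisenstein_G 2 ^ a *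
            (case bc of (b, c) \<Rightarrow> fps_const (Q (k - a) 0 b c) * eisenstein_G 4 ^ b * eisenstein_G 6 ^ c))"
          unfolding xe by (simp add: mult_ac)
      qed simp
    qed
    also have "\<dots> = (\<Sum>a\<le>k. \<Sum>bc\<in>W (k - a). fps_const (2 ^ a / fact a) * eisenstein_G 2 ^ a *
         (case bc of (b, c) \<Rightarrow> fps_const (Q (k - a) 0 b c) * eisenstein_G 4 ^ b * eisenstein_G 6 ^ c))"
      by (subst sum.Sigma) (auto simp: finite_W)
    also have "\<dots> = (\<Sum>a\<le>k. fps_const (2 ^ a / fact a) * eisenstein_G 2 ^ a * F (k - a))"
      by (simp add: F_def sum_distrib_left case_prod_beta)
    finally show ?thesis .
  qed
  have Dn: "D k $ n = (\<Sum>a\<le>k. 2 ^ a / fact a * (eisenstein_G 2 ^ a $ 0) * (F (k - a) $ n))"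
    if IH: "\<forall>i<n. \<forall>m. F m $ i = 0" for n k
  proof -
    have t: "(eisenstein_G 2 ^ a * F m) $ n = eisenstein_G 2 ^ a $ 0 * F m $ n" for a m
    proof -
      have "(eisenstein_G 2 ^ a * F m) $ n = (\<Sum>i=0..n. eisenstein_G 2 ^ a $ i * F m $ (n - i))"
        by (rule fps_mult_nth)
      also have "\<dots> = eisenstein_G 2 ^ a $ 0 * F m $ (n - 0) + (\<Sum>i=Suc 0..n. eisenstein_G 2 ^ a $ i * F m $ (n - i))"
        by (rule sum.atLeast_Suc_atMost) simp
      also have "(\<Sum>i=Suc 0..n. eisenstein_G 2 ^ a $ i * F m $ (n - i)) = 0"
        by (rule sum.neutral) (use IH in auto)
      finally show ?thesis by simp
    qed
    show ?thesis unfolding Dexp fps_sum_nth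
      by (rule sum.cong) (simp_all add: mult.assoc t)
  qed
  have main: "\<forall>m. F m $ n = 0" for n
  proof (induction n rule: less_induct)
    case (less n)
    then have IH: "\<forall>i<n. \<forall>m. F m $ i = 0" by blast
    have small: "D k $ n = 0" if "n \<ge> 1" "k < 6 * n" for k
    proof -
      have "F m = 0" if "m < 6 * n" for m
        unfolding F_def
        by (rule weight_zero[OF _ that]) (use IH in \<open>simp add: F_def\<close>)
      then show ?thesis using Dn[OF IH, of k] \<open>k < 6 * n\<close> by simp
    qed
    obtain p where p: "degree p = 2 * n"
      "\<forall>k\<ge>n. A k $ n = poly p (of_nat k) / ((- 4) ^ k * of_nat (odd_dfact k))"
      using poly_coeff by blast
    obtain p' where p': "degree p' = 2 * n"
      "\<forall>k\<ge>n. A' k $ n = poly p' (of_nat k) / ((- 4) ^ k * of_nat (odd_dfact k))"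
      using poly_coeff' by blast
    define r where "r = p - p'"
    have den: "((- 4) ^ k * of_nat (odd_dfact k) :: complex) \<noteq> 0" for k
      using odd_dfact_pos[of k] by simp
    have hr: "D k $ n = poly r (of_nat k) / ((- 4) ^ k * of_nat (odd_dfact k))" if "k \<ge> n" for k
      using p(2) p'(2) that by (simp add: D_def r_def diff_divide_distrib)
    define K where "K = (if n = 0 then {0} else {n..<6 * n})"
    have K: "n \<le> k \<and> D k $ n = 0" if "k \<in> K" for k
    proof (cases "n = 0")
      case True
      then show ?thesis using that const const' by (simp add: K_def D_def)
    next
      case False
      then show ?thesis using that small by (auto simp: K_def)
    qed
    have r0: "r = 0"
    proof (rule ccontr)
      assume rnz: "r \<noteq> 0"
      have sub: "of_nat ` K \<subseteq> {x. poly r x = 0}"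
      proof
        fix x assume "x \<in> (of_nat ` K :: complex set)"
        then obtain k where "k \<in> K" "x = of_nat k" by auto
        then show "x \<in> {x. poly r x = 0}" using K[of k] hr[of k] den[of k] by auto
      qed
      have "card (of_nat ` K :: complex set) = card K"
        by (rule card_image) (auto simp: inj_on_def)
      also have "card K > 2 * n" by (auto simp: K_def)
      finally have "2 * n < card (of_nat ` K :: complex set)" .
      also have "\<dots> \<le> card {x. poly r x = 0}"
        by (rule card_mono[OF poly_roots_finite[OF rnz] sub])
      also have "\<dots> \<le> degree r" by (rule card_poly_roots_bound[OF rnz])
      also have "\<dots> \<le> 2 * n" unfolding r_def using degree_diff_le_max[of p p'] p(1) p'(1) by simp
      finally show False by simp
    qed
    have Dz: "D k $ n = 0" for k
    proof (cases "k \<ge> n")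
      case True then show ?thesis using hr r0 by simp
    next
      case False then show ?thesis using small[of k] by simp
    qed
    show ?case
    proof
      fix m
      show "F m $ n = 0"
      proof (induction m rule: less_induct)
        case (less m)
        have "0 = D m $ n" using Dz by simp
        also have "\<dots> = (\<Sum>a\<le>m. 2 ^ a / fact a * (eisenstein_G 2 ^ a $ 0) * (F (m - a) $ n))"
          by (rule Dn[OF IH])
        also have "\<dots> = (\<Sum>a\<le>m. if a = 0 then F m $ n else 0)"
          by (rule sum.cong) (use less.IH in auto)
        also have "\<dots> = F m $ n" by simp
        finally show ?case by simp
      qed
    qed
  qed
  show ?thesis
  proof
    fix k
    show "A k = A' k"
    proof (rule fps_ext)
      fix n
      have "D k $ n = 0" using Dn[of n k] main by simp
      then show "A k $ n = A' k $ n" by (simp add: D_def)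
    qed
  qed
qed

end
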